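(* Let $X$ be a real $n\times p$ matrix ($p<n$) of full rank, let $\sigma>0$, $f\in\mathbb{R}^p$, $z\in\mathbb{R}^n$, and $y=Xf+z$. Let $z=X\bar g+\bar b$ be the unique decomposition with $\bar g\in\mathbb{R}^p$ and $\bar b\in\ker X^\top$, and set $f_n=f+\bar g$. If $\|\bar b\|_\infty<\sigma$, then $(f_n,\bar b)$ is the unique solution of $$\min_{(g,b)\in\mathbb{R}^p\times\mathbb{R}^n}\ \sigma\|y-Xg-b\|_1+\tfrac12\|b\|_2^2.$$
   Context: $f_n$ is the least squares estimator $(X^\top X)^{-1}X^\top y$. *)

theory Defs
  imports "HOL-Analysis.Analysis"
begin

definition l1_norm :: "real^'n \<Rightarrow> real" where
  "l1_norm v = (\<Sum>i\<in>UNIV. \<bar>v $ i\<bar>)"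

definition linf_norm :: "real^'n \<Rightarrow> real" where
  "linf_norm v = Max (range (\<lambda>i. \<bar>v $ i\<bar>))"

end

theory Submission
  imports Defs
begin

lemma linf_ge: "\<bar>v $ i\<bar> \<le> linf_norm (v::real^'n)"
  unfolding linf_norm_def by (rule Max_ge) auto

lemma l1_nonneg: "0 \<le> l1_norm (v::real^'n)"
  unfolding l1_norm_def by (simp add: sum_nonneg)

lemma l1_zero: "l1_norm (v::real^'n) = 0 \<Longrightarrow> v = 0"
  unfolding l1_norm_def
  by (subst (asm) sum_nonneg_eq_0_iff) (auto simp: vec_eq_iff)

lemma inner_bound: "\<bar>inner (b::real^'n) r\<bar> \<le> linf_norm b * l1_norm r"
proof -
  have "\<bar>inner b r\<bar> = \<bar>\<Sum>i\<in>UNIV. b$i * r$i\<bar>" by (simp add: inner_vec_def)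
  also have "\<dots> \<le> (\<Sum>i\<in>UNIV. \<bar>b$i * r$i\<bar>)" by (rule sum_abs)
  also have "\<dots> \<le> (\<Sum>i\<in>UNIV. linf_norm b * \<bar>r$i\<bar>)"
    by (rule sum_mono) (simp add: abs_mult mult_right_mono linf_ge)
  also have "\<dots> = linf_norm b * l1_norm r" by (simp add: l1_norm_def sum_distrib_left)
  finally show ?thesis .
qed

theorem proposition4p4:
  fixes X :: "real^'p^'n" and \<sigma> :: real and f gbar :: "real^'p"
    and z y bbar :: "real^'n"
  assumes "CARD('p) < CARD('n)"
    and "rank X = CARD('p)"
    and "\<sigma> > 0"
    and "y = X *v f + z"
    and "z = X *v gbar + bbar"
    and "transpose X *v bbar = 0"
    and "linf_norm bbar < \<sigma>"
  shows "(\<forall>g b. \<sigma> * l1_norm (y - X *v (f + gbar) - bbar) + (1/2) * (norm bbar)^2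
                 \<le> \<sigma> * l1_norm (y - X *v g - b) + (1/2) * (norm b)^2)
       \<and> (\<forall>g b. \<sigma> * l1_norm (y - X *v g - b) + (1/2) * (norm b)^2
                 \<le> \<sigma> * l1_norm (y - X *v (f + gbar) - bbar) + (1/2) * (norm bbar)^2
               \<longrightarrow> g = f + gbar \<and> b = bbar)"
proof -
  define c where "c = f + gbar"
  have yc: "y = X *v c + bbar" using assms(4,5) by (simp add: c_def matrix_vector_right_distrib)
  have r0: "y - X *v c - bbar = 0" using yc by simp
  have l10: "l1_norm (0::real^'n) = 0" by (simp add: l1_norm_def)
  have cand: "\<sigma> * l1_norm (y - X *v (f + gbar) - bbar) = 0"
    using r0 l10 by (simp add: c_def)
  have orth: "inner bbar (X *v h) = 0" for h
  proof -
    have "inner bbar (X *v h) = inner (bbar v* X) h" by (simp add: dot_lmul_matrix)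
    also have "bbar v* X = 0" using assms(6) by simp
    finally show ?thesis by simp
  qed
  have key: "\<sigma> * l1_norm (y - X *v g - b) + (1/2) * (norm b)^2 - (1/2) * (norm bbar)^2
      \<ge> (\<sigma> - linf_norm bbar) * l1_norm (y - X *v g - b) + (1/2) * inner (b - bbar) (b - bbar)
      \<and> y - X *v g - b = X *v (c - g) - (b - bbar)" for g b
  proof -
    define r where "r = y - X *v g - b"
    define d where "d = b - bbar"
    have rr: "r = X *v (c - g) - d" unfolding r_def d_def yc
      by (simp add: matrix_vector_mult_diff_distrib algebra_simps)
    have bd: "inner bbar d = - inner bbar r"
      using orth[of "c - g"] by (simp add: rr inner_diff_right)
    have nb: "(norm b)^2 = (norm bbar)^2 + 2 * inner bbar d + inner d d"
      by (simp add: d_def power2_norm_eq_inner inner_diff_left inner_diff_right inner_commute)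
    have "inner bbar r \<le> linf_norm bbar * l1_norm r" using inner_bound[of bbar r] by linarith
    then show ?thesis using nb bd rr by (simp add: r_def d_def algebra_simps)
  qed
  show ?thesis
  proof (rule conjI; intro allI impI)
    fix g b
    have "0 \<le> (\<sigma> - linf_norm bbar) * l1_norm (y - X *v g - b)"
      using assms(7) l1_nonneg[of "y - X *v g - b"] by simp
    moreover have "0 \<le> inner (b - bbar) (b - bbar)" by simp
    ultimately show "\<sigma> * l1_norm (y - X *v (f + gbar) - bbar) + (1/2) * (norm bbar)^2
                 \<le> \<sigma> * l1_norm (y - X *v g - b) + (1/2) * (norm b)^2"
      using conjunct1[OF key[of g b]] cand by linarith
  next
    fix g b
    assume le: "\<sigma> * l1_norm (y - X *v g - b) + (1/2) * (norm b)^2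
                 \<le> \<sigma> * l1_norm (y - X *v (f + gbar) - bbar) + (1/2) * (norm bbar)^2"
    have A: "0 \<le> (\<sigma> - linf_norm bbar) * l1_norm (y - X *v g - b)"
      using assms(7) l1_nonneg[of "y - X *v g - b"] by simp
    have B: "0 \<le> inner (b - bbar) (b - bbar)" by simp
    have C: "(\<sigma> - linf_norm bbar) * l1_norm (y - X *v g - b) + (1/2) * inner (b - bbar) (b - bbar) \<le> 0"
      using conjunct1[OF key[of g b]] le cand by linarith
    have "(\<sigma> - linf_norm bbar) * l1_norm (y - X *v g - b) = 0" using A B C by linarith
    hence "l1_norm (y - X *v g - b) = 0" using assms(7) by simp
    hence r: "y - X *v g - b = 0" by (rule l1_zero)
    have "inner (b - bbar) (b - bbar) = 0" using A B C by linarith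
    hence d: "b = bbar" by simp
    have "X *v (c - g) = 0" using key[of g b] r d by simp
    hence "X *v (c - g) = X *v 0" by simp
    moreover have "inj ((*v) X)" using assms(2) full_rank_injective by blast
    ultimately have "c - g = 0" by (meson injD)
    thus "g = f + gbar \<and> b = bbar" using d by (simp add: c_def)
  qed
qed

end
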